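(* Let $n$ be a positive integer and $v$ an odd positive integer, let $q=v^{1/n}$, assume $q\ge3$, and put $m=\left\lfloor\frac{q-1}{2}\right\rfloor$. Then there exists a $\left(q^n,\ m^nq^n,\ m^n(q^n-2^n),\ q^n\right)$ placement delivery array, which realizes a coded caching scheme with $K=q^n$ users, memory ratio $\frac{M}{N}=1-\left(\frac{2}{q}\right)^n$, subpacketization $m^nq^n$, and transmission load $R=m^{-n}$.
   Context: A $(K,F,Z,S)$ placement delivery array (PDA) is an $F\times K$ array $\mathbf{P}=(p_{j,k})$ with entries from $\{*\}\cup\{1,\dots,S\}$ such that: (C1) each column contains exactly $Z$ stars; (C2) each integer of $\{1,\dots,S\}$ occurs at least once; (C3) for any two distinct entries $p_{j_1,k_1}=p_{j_2,k_2}=s$ (an integer) we have $j_1\neq j_2$, $k_1\neq k_2$, and $p_{j_1,k_2}=p_{j_2,k_1}=*$. A $(K,M,N)$ coded caching system consists of a server storing $N$ equal-size files and $K$ users each with a cache of size $M$ files, connected by an error-free shared broadcast link. An $F$-division scheme splits each file into $F$ equal-size packets placed (uncoded) in caches independently of demands; in delivery each user requests one file and the server broadcasts XORs of packets so every user decodes its request. The load $R$ is the worst-case normalized broadcast size; $M/N$ is the memory ratio. A $(K,F,Z,S)$ PDA realizes an $F$-division scheme with $M/N=Z/F$ and $R=S/F$. *)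

theory Defs
  imports Complex_Main
begin

text \<open>A (K,F,Z,S) placement delivery array: an F x K array with rows j < F and
columns k < K. The entry P j k is None for a star and Some s for an integer s.\<close>

definition is_PDA :: "nat \<Rightarrow> nat \<Rightarrow> nat \<Rightarrow> nat \<Rightarrow> (nat \<Rightarrow> nat \<Rightarrow> nat option) \<Rightarrow> bool" where
  "is_PDA K F Z S P \<longleftrightarrow>
     (\<forall>j<F. \<forall>k<K. \<forall>s. P j k = Some s \<longrightarrow> 1 \<le> s \<and> s \<le> S) \<and>
     (\<forall>k<K. card {j. j < F \<and> P j k = None} = Z) \<and>
     (\<forall>s\<in>{1..S}. \<exists>j<F. \<exists>k<K. P j k = Some s) \<and>
     (\<forall>j1<F. \<forall>k1<K. \<forall>j2<F. \<forall>k2<K. \<forall>s.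
        P j1 k1 = Some s \<and> P j2 k2 = Some s \<and> (j1, k1) \<noteq> (j2, k2) \<longrightarrow>
        j1 \<noteq> j2 \<and> k1 \<noteq> k2 \<and> P j1 k2 = None \<and> P j2 k1 = None)"

end

theory Submission
  imports Defs "HOL-Library.FuncSet"
begin


definition dval :: "nat \<Rightarrow> int \<Rightarrow> (nat \<Rightarrow> int) \<Rightarrow> int" where
  "dval n b d = (\<Sum>i<n. d i * b ^ i)"

lemma sum_bound:
  fixes b c :: int
  assumes "b \<ge> 1" "\<forall>i<n. \<bar>d i\<bar> \<le> c"
  shows "(b - 1) * \<bar>dval n b d\<bar> \<le> c * (b ^ n - 1)"
  using assms(2)
proof (induction n)
  case 0
  then show ?case by (simp add: dval_def)
next
  case (Suc n)
  have IH: "(b - 1) * \<bar>dval n b d\<bar> \<le> c * (b ^ n - 1)" using Suc by auto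
  have dn: "\<bar>d n\<bar> \<le> c" using Suc.prems by auto
  have eq: "dval (Suc n) b d = dval n b d + d n * b ^ n" by (simp add: dval_def)
  have bp: "b ^ n \<ge> 0" using assms(1) by simp
  have tri: "\<bar>dval (Suc n) b d\<bar> \<le> \<bar>dval n b d\<bar> + \<bar>d n\<bar> * b ^ n"
    unfolding eq using abs_triangle_ineq[of "dval n b d" "d n * b ^ n"] bp by (simp add: abs_mult)
  have "(b - 1) * \<bar>dval (Suc n) b d\<bar> \<le> (b - 1) * \<bar>dval n b d\<bar> + (b - 1) * (\<bar>d n\<bar> * b ^ n)"
    using mult_left_mono[OF tri, of "b - 1"] assms(1) by (simp add: distrib_left)
  also have "\<dots> \<le> c * (b ^ n - 1) + (b - 1) * (c * b ^ n)"
    using IH dn bp assms(1) by (intro add_mono mult_left_mono mult_right_mono) auto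
  also have "\<dots> = c * (b ^ Suc n - 1)" by (simp add: algebra_simps)
  finally show ?case .
qed

lemma digits_zero:
  fixes b :: int
  assumes "b \<ge> 2" "\<forall>i<n. \<bar>d i\<bar> \<le> b - 1" "dval n b d = 0"
  shows "\<forall>i<n. d i = 0"
  using assms(2,3)
proof (induction n)
  case 0
  then show ?case by simp
next
  case (Suc n)
  have eq: "dval (Suc n) b d = dval n b d + d n * b ^ n" by (simp add: dval_def)
  have B: "(b - 1) * \<bar>dval n b d\<bar> \<le> (b - 1) * (b ^ n - 1)"
    using sum_bound[of b n d "b - 1"] Suc.prems assms(1) by auto
  have B2: "\<bar>dval n b d\<bar> \<le> b ^ n - 1" by (rule mult_left_le_imp_le[OF B]) (use assms(1) in simp)
  have "d n * b ^ n = - dval n b d" using Suc.prems(2) eq by simp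
  hence "\<bar>d n * b ^ n\<bar> = \<bar>dval n b d\<bar>" by simp
  hence "\<bar>d n\<bar> * b ^ n = \<bar>dval n b d\<bar>" using assms(1) by (simp add: abs_mult)
  hence "\<bar>d n\<bar> * b ^ n < 1 * b ^ n" using B2 by simp
  hence "\<bar>d n\<bar> < 1" by (rule mult_right_less_imp_less) (use assms(1) in simp)
  hence dn: "d n = 0" by simp
  have dv0: "dval n b d = 0" using eq Suc.prems(2) dn by simp
  have pr: "\<forall>i<n. \<bar>d i\<bar> \<le> b - 1" using Suc.prems(1) by simp
  have "\<forall>i<n. d i = 0" using Suc.IH[OF pr dv0] .
  then show ?case using dn less_Suc_eq by auto
qed

lemma digits_eq:
  fixes m :: nat
  assumes "m \<ge> 1" "\<forall>i<n. \<bar>x i\<bar> \<le> int m" "\<forall>i<n. \<bar>y i\<bar> \<le> int m"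
    "dval n (2 * int m + 1) x = dval n (2 * int m + 1) y"
  shows "\<forall>i<n. x i = y i"
proof -
  have "dval n (2 * int m + 1) (\<lambda>i. x i - y i) = dval n (2 * int m + 1) x - dval n (2 * int m + 1) y"
    by (simp add: dval_def left_diff_distrib sum_subtractf)
  hence z: "dval n (2 * int m + 1) (\<lambda>i. x i - y i) = 0" using assms(4) by simp
  have bd: "\<forall>i<n. \<bar>x i - y i\<bar> \<le> (2 * int m + 1) - 1"
  proof (intro allI impI)
    fix i assume "i < n"
    hence "\<bar>x i\<bar> \<le> int m" "\<bar>y i\<bar> \<le> int m" using assms(2,3) by auto
    thus "\<bar>x i - y i\<bar> \<le> (2 * int m + 1) - 1" using abs_triangle_ineq4[of "x i" "y i"] by linarith
  qed
  have "\<forall>i<n. x i - y i = 0" by (rule digits_zero[OF _ bd z]) (use assms(1) in simp)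
  thus ?thesis by simp
qed

lemma val_small:
  fixes m :: nat
  assumes "m \<ge> 1" "\<forall>i<n. \<bar>x i\<bar> \<le> int m"
  shows "2 * \<bar>dval n (2 * int m + 1) x\<bar> \<le> (2 * int m + 1) ^ n - 1"
proof -
  have h: "(2 * int m + 1 - 1) * \<bar>dval n (2 * int m + 1) x\<bar> \<le> int m * ((2 * int m + 1) ^ n - 1)"
    by (rule sum_bound) (use assms in auto)
  have e: "(2 * int m + 1 - 1) * A = int m * (2 * A)" for A :: int by (simp add: algebra_simps)
  have "int m * (2 * \<bar>dval n (2 * int m + 1) x\<bar>) \<le> int m * ((2 * int m + 1) ^ n - 1)"
    using h unfolding e .
  thus ?thesis by (rule mult_left_le_imp_le) (use assms(1) in simp)
qed

lemma eq_small:
  fixes V x y :: int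
  assumes "V > 0" "2 * \<bar>x\<bar> < V" "2 * \<bar>y\<bar> < V" "V dvd x - y"
  shows "x = y"
proof (rule ccontr)
  assume "x \<noteq> y"
  hence "\<bar>V\<bar> \<le> \<bar>x - y\<bar>" using dvd_imp_le_int assms(4) by auto
  thus False using assms by linarith
qed

lemma odd_dvd2:
  fixes V y :: int
  assumes "odd V" "V dvd 2 * y"
  shows "V dvd y"
proof -
  obtain c where c: "2 * y = V * c" using assms(2) by (auto elim!: dvdE)
  have "even (V * c)" using c by (metis dvd_triv_left)
  hence "even c" using assms(1) by simp
  then obtain c' where "c = 2 * c'" by (auto elim: evenE)
  hence "y = V * c'" using c by simp
  thus ?thesis by simp
qed

lemma dvd_comb:
  fixes V :: int
  assumes "V dvd a" "V dvd b" "V dvd c"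
  shows "V dvd x * a + y * b + z * c"
  using assms by (simp add: dvd_add dvd_mult)

definition Rset :: "nat \<Rightarrow> nat \<Rightarrow> (nat \<Rightarrow> int) set" where
  "Rset n m = PiE {..<n} (\<lambda>_. {1..int m})"
definition Sset :: "nat \<Rightarrow> (nat \<Rightarrow> int) set" where
  "Sset n = PiE {..<n} (\<lambda>_. {-1, 1::int})"
definition ev :: "nat \<Rightarrow> nat \<Rightarrow> (nat \<Rightarrow> int) \<Rightarrow> (nat \<Rightarrow> int) \<Rightarrow> int" where
  "ev n m r \<sigma> = dval n (2 * int m + 1) (\<lambda>i. \<sigma> i * r i)"

lemma card_Rset: "card (Rset n m) = m ^ n"
  unfolding Rset_def by (simp add: card_PiE)

lemma card_Sset: "card (Sset n) = 2 ^ n"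
proof -
  have c: "card {-1, 1::int} = 2" by simp
  show ?thesis by (simp only: Sset_def card_PiE[OF finite_lessThan] c prod_constant card_lessThan)
qed

lemma finite_Rset: "finite (Rset n m)"
  unfolding Rset_def by (simp add: finite_PiE)

lemma finite_Sset: "finite (Sset n)"
  unfolding Sset_def by (simp add: finite_PiE)

lemma mem_R:
  assumes "r \<in> Rset n m" "i < n"
  shows  "1 \<le> r i" "r i \<le> int m"
proof -
  have "r i \<in> {1..int m}" using PiE_mem[OF assms(1)[unfolded Rset_def]] assms(2) by simp
  thus  "1 \<le> r i" "r i \<le> int m" by simp_all
qed

lemma mem_S:
  assumes "\<sigma> \<in> Sset n" "i < n"
  shows "\<sigma> i = 1 \<or> \<sigma> i = -1"
proof -
  have "\<sigma> i \<in> {-1, 1}" using PiE_mem[OF assms(1)[unfolded Sset_def]] assms(2) by simp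
  thus ?thesis by auto
qed

lemma dig_bound:
  assumes "r \<in> Rset n m" "\<sigma> \<in> Sset n" "i < n"
  shows "\<bar>\<sigma> i * r i\<bar> \<le> int m" "\<sigma> i * r i \<noteq> 0" "\<bar>\<sigma> i\<bar> = 1" "r i \<ge> 1"
proof -
  have r: "1 \<le> r i" "r i \<le> int m" using mem_R[OF assms(1,3)] by simp_all
  have s: "\<sigma> i = 1 \<or> \<sigma> i = -1" using mem_S[OF assms(2,3)] .
  have a: "\<bar>\<sigma> i * r i\<bar> = r i" using s r(1) by (elim disjE) simp_all
  show "\<bar>\<sigma> i * r i\<bar> \<le> int m" using a r by simp
  show "\<sigma> i * r i \<noteq> 0" using a r by auto
  show "\<bar>\<sigma> i\<bar> = 1" using s by (elim disjE) simp_all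
  show "r i \<ge> 1" using r by simp
qed

lemma ev_small:
  assumes "m \<ge> 1" "r \<in> Rset n m" "\<sigma> \<in> Sset n"
  shows "2 * \<bar>ev n m r \<sigma>\<bar> \<le> (2 * int m + 1) ^ n - 1"
proof -
  have "\<forall>i<n. \<bar>\<sigma> i * r i\<bar> \<le> int m" using dig_bound(1)[OF assms(2,3)] by blast
  thus ?thesis unfolding ev_def by (rule val_small[OF assms(1)])
qed

lemma ev_inj:
  assumes "m \<ge> 1" "r \<in> Rset n m" "\<sigma> \<in> Sset n" "r' \<in> Rset n m" "\<sigma>' \<in> Sset n"
    "ev n m r \<sigma> = ev n m r' \<sigma>'"
  shows "r = r' \<and> \<sigma> = \<sigma>'"
proof -
  have b1: "\<forall>i<n. \<bar>\<sigma> i * r i\<bar> \<le> int m" using dig_bound(1)[OF assms(2,3)] by blast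
  have b2: "\<forall>i<n. \<bar>\<sigma>' i * r' i\<bar> \<le> int m" using dig_bound(1)[OF assms(4,5)] by blast
  have d: "\<forall>i<n. \<sigma> i * r i = \<sigma>' i * r' i"
    by (rule digits_eq[OF assms(1) b1 b2]) (use assms(6) in \<open>simp add: ev_def\<close>)
  have rr: "r i = r' i" if "i < n" for i
  proof -
    have "\<bar>\<sigma> i * r i\<bar> = r i" using dig_bound(3,4)[OF assms(2,3) that] by (simp add: abs_mult)
    moreover have "\<bar>\<sigma>' i * r' i\<bar> = r' i" using dig_bound(3,4)[OF assms(4,5) that] by (simp add: abs_mult)
    ultimately show ?thesis using d that by metis
  qed
  have ss: "\<sigma> i = \<sigma>' i" if "i < n" for i
  proof -
    have "\<sigma> i * r i = \<sigma>' i * r' i" using d that by simp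
    hence "\<sigma> i * r i = \<sigma>' i * r i" using rr[OF that] by simp
    moreover have "r i \<noteq> 0" using dig_bound(4)[OF assms(2,3) that] by simp
    ultimately show ?thesis by simp
  qed
  have "r = r'" by (rule PiE_ext[OF assms(2)[unfolded Rset_def] assms(4)[unfolded Rset_def]]) (use rr in simp)
  moreover have "\<sigma> = \<sigma>'" by (rule PiE_ext[OF assms(3)[unfolded Sset_def] assms(5)[unfolded Sset_def]]) (use ss in simp)
  ultimately show ?thesis by simp
qed

lemma midpoint:
  assumes "r \<in> Rset n m" "\<sigma>1 \<in> Sset n" "\<sigma> \<in> Sset n"
  shows "\<exists>w. (\<forall>i<n. \<bar>w i\<bar> \<le> int m) \<and> (\<forall>i<n. \<sigma> i \<noteq> \<sigma>1 i \<longrightarrow> w i = 0)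
     \<and> ev n m r \<sigma>1 + ev n m r \<sigma> = 2 * dval n (2 * int m + 1) w"
proof -
  define w where "w i = (if \<sigma>1 i = \<sigma> i then \<sigma>1 i * r i else 0)" for i
  have pm: "\<sigma> i = - \<sigma>1 i" if "i < n" "\<sigma>1 i \<noteq> \<sigma> i" for i
    using mem_S[OF assms(2) that(1)] mem_S[OF assms(3) that(1)] that(2) by auto
  have "\<bar>w i\<bar> \<le> int m" if "i < n" for i
    using dig_bound(1)[OF assms(1,2) that] unfolding w_def by auto
  moreover have "\<sigma> i \<noteq> \<sigma>1 i \<longrightarrow> w i = 0" if "i < n" for i unfolding w_def by simp
  moreover have "ev n m r \<sigma>1 + ev n m r \<sigma> = 2 * dval n (2 * int m + 1) w"
  proof -
    have "\<sigma>1 i * r i * (2 * int m + 1) ^ i + \<sigma> i * r i * (2 * int m + 1) ^ i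
        = 2 * (w i * (2 * int m + 1) ^ i)" if "i \<in> {..<n}" for i
    proof (cases "\<sigma>1 i = \<sigma> i")
      case True
      then show ?thesis unfolding w_def by simp
    next
      case False
      then show ?thesis using pm[of i] that unfolding w_def by simp
    qed
    hence "(\<Sum>i<n. \<sigma>1 i * r i * (2 * int m + 1) ^ i + \<sigma> i * r i * (2 * int m + 1) ^ i)
        = (\<Sum>i<n. 2 * (w i * (2 * int m + 1) ^ i))" by (rule sum.cong[OF refl])
    thus ?thesis unfolding ev_def dval_def by (simp add: sum.distrib sum_distrib_left)
  qed
  ultimately show ?thesis by blast
qed



definition Qf :: "nat \<Rightarrow> nat \<Rightarrow> nat \<Rightarrow> (nat \<Rightarrow> int) \<times> nat \<Rightarrow> nat \<Rightarrow> nat option" where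
  "Qf n m v x k = (if (\<exists>\<sigma>\<in>Sset n. (int k - int (snd x)) mod int v = ev n m (fst x) \<sigma> mod int v)
     then Some (nat ((2 * int (snd x) - int k) mod int v) + 1) else None)"

lemma Qf_some:
  assumes "Qf n m v (r, j) k = Some s"
  obtains \<sigma> where "\<sigma> \<in> Sset n" "int v dvd (int k - int j - ev n m r \<sigma>)"
    "s = nat ((2 * int j - int k) mod int v) + 1"
proof -
  from assms obtain \<sigma> where "\<sigma> \<in> Sset n" "(int k - int j) mod int v = ev n m r \<sigma> mod int v"
    "s = nat ((2 * int j - int k) mod int v) + 1"
    unfolding Qf_def by (auto split: if_splits)
  thus ?thesis using that by (metis mod_eq_dvd_iff)
qed

lemma small_diff:
  assumes "a < v" "b < v"
  shows "2 * \<bar>int a\<bar> < 2 * int v" "\<bar>int a - int b\<bar> < int v"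
  using assms by auto

lemma half:
  assumes m1: "m \<ge> 1" and ov: "odd v" and bv: "(2 * int m + 1) ^ n \<le> int v"
    and r1: "r1 \<in> Rset n m" and r2: "r2 \<in> Rset n m"
    and j: "j1 < v" "j2 < v" and k: "k1 < v" "k2 < v"
    and q1: "Qf n m v (r1, j1) k1 = Some s" and q2: "Qf n m v (r2, j2) k2 = Some s"
    and ne: "((r1, j1), k1) \<noteq> ((r2, j2), k2)"
  shows "(r1, j1) \<noteq> (r2, j2) \<and> k1 \<noteq> k2 \<and> Qf n m v (r1, j1) k2 = None"
proof -
  define V where "V = int v"
  have V0: "V > 0" using j unfolding V_def by auto
  have oV: "odd V" using ov unfolding V_def by simp
  obtain \<sigma>1 where s1: "\<sigma>1 \<in> Sset n" "V dvd (int k1 - int j1 - ev n m r1 \<sigma>1)"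
    "s = nat ((2 * int j1 - int k1) mod V) + 1" using Qf_some[OF q1] V_def by metis
  obtain \<sigma>2 where s2: "\<sigma>2 \<in> Sset n" "V dvd (int k2 - int j2 - ev n m r2 \<sigma>2)"
    "s = nat ((2 * int j2 - int k2) mod V) + 1" using Qf_some[OF q2] V_def by metis
  define e1 where "e1 = ev n m r1 \<sigma>1"
  define e2 where "e2 = ev n m r2 \<sigma>2"
  define A1 where "A1 = int k1 - int j1 - e1"
  define A2 where "A2 = int k2 - int j2 - e2"
  define A3 where "A3 = (2 * int j1 - int k1) - (2 * int j2 - int k2)"
  have d1: "V dvd A1" using s1 unfolding A1_def e1_def by simp
  have d2: "V dvd A2" using s2 unfolding A2_def e2_def by simp
  have "nat ((2 * int j1 - int k1) mod V) = nat ((2 * int j2 - int k2) mod V)"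
    using s1(3) s2(3) by simp
  moreover have "(2 * int j1 - int k1) mod V \<ge> 0" "(2 * int j2 - int k2) mod V \<ge> 0" using V0 by simp_all
  ultimately have "(2 * int j1 - int k1) mod V = (2 * int j2 - int k2) mod V" by simp
  hence d3: "V dvd A3" unfolding A3_def by (metis mod_eq_dvd_iff)
  have smallV: "2 * \<bar>ev n m r \<sigma>\<bar> < V" if "r \<in> Rset n m" "\<sigma> \<in> Sset n" for r \<sigma>
    using ev_small[OF m1 that] bv unfolding V_def by linarith
  have kk: "\<bar>int k1 - int k2\<bar> < V" "\<bar>int j1 - int j2\<bar> < V" using j k unfolding V_def by auto
  have eqs: "x = y" if "V dvd x - y" "\<bar>x - y\<bar> < V" for x y :: int
  proof (rule ccontr)
    assume "x \<noteq> y"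
    hence "\<bar>V\<bar> \<le> \<bar>x - y\<bar>" using dvd_imp_le_int[of "x - y" V] that(1) by simp
    thus False using that(2) by simp
  qed
  have nk: "k1 \<noteq> k2"
  proof
    assume kq: "k1 = k2"
    have "2 * (e2 - e1) = 2 * A1 + (-2) * A2 + 1 * A3" unfolding A1_def A2_def A3_def using kq
      by (simp add: algebra_simps)
    hence "V dvd 2 * (e2 - e1)" using dvd_comb[OF d1 d2 d3] by metis
    hence "V dvd e2 - e1" by (rule odd_dvd2[OF oV])
    hence "e2 = e1" unfolding e1_def e2_def by (rule eq_small[OF V0 smallV[OF r2 s2(1)] smallV[OF r1 s1(1)]])
    hence rs: "r1 = r2 \<and> \<sigma>1 = \<sigma>2" using ev_inj[OF m1 r1 s1(1) r2 s2(1)] unfolding e1_def e2_def by simp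
    have "int j2 - int j1 = 1 * A1 + (-1) * A2 + 0 * A3" unfolding A1_def A2_def using kq \<open>e2 = e1\<close>
      by (simp add: algebra_simps)
    hence "V dvd int j2 - int j1" using dvd_comb[OF d1 d2 d3] by metis
    hence "j1 = j2" using eqs kk by (metis abs_minus_commute of_nat_eq_iff)
    thus False using ne kq rs by simp
  qed
  have nr: "(r1, j1) \<noteq> (r2, j2)"
  proof
    assume rq: "(r1, j1) = (r2, j2)"
    have "int k2 - int k1 = 0 * A1 + 0 * A2 + 1 * A3" unfolding A3_def using rq by simp
    hence "V dvd int k2 - int k1" using dvd_comb[OF d1 d2 d3] by metis
    hence "k1 = k2" using eqs kk by (metis abs_minus_commute of_nat_eq_iff)
    thus False using nk by simp
  qed
  have nq: "Qf n m v (r1, j1) k2 = None"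
  proof (rule ccontr)
    assume "Qf n m v (r1, j1) k2 \<noteq> None"
    then obtain \<sigma> where s: "\<sigma> \<in> Sset n" "(int k2 - int j1) mod V = ev n m r1 \<sigma> mod V"
      unfolding Qf_def V_def by (auto split: if_splits)
    define e where "e = ev n m r1 \<sigma>"
    define A4 where "A4 = int k2 - int j1 - e"
    have d4: "V dvd A4" using s unfolding A4_def e_def by (metis mod_eq_dvd_iff)
    obtain w where w: "\<forall>i<n. \<bar>w i\<bar> \<le> int m" "\<forall>i<n. \<sigma> i \<noteq> \<sigma>1 i \<longrightarrow> w i = 0"
      "e1 + e = 2 * dval n (2 * int m + 1) w"
      using midpoint[OF r1 s1(1) s(1)] unfolding e1_def e_def by blast
    have "2 * (e2 - dval n (2 * int m + 1) w) = (-2) * A2 + 1 * A1 + 1 * (A4 + A3)"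
      unfolding A1_def A2_def A3_def A4_def using w(3) by (simp add: algebra_simps)
    moreover have "V dvd A4 + A3" using d4 d3 by simp
    ultimately have "V dvd 2 * (e2 - dval n (2 * int m + 1) w)" using dvd_comb[OF d2 d1 \<open>V dvd A4 + A3\<close>] by metis
    hence dv: "V dvd e2 - dval n (2 * int m + 1) w" by (rule odd_dvd2[OF oV])
    have sw: "2 * \<bar>dval n (2 * int m + 1) w\<bar> < V" using val_small[OF m1 w(1)] bv unfolding V_def by linarith
    have "ev n m r2 \<sigma>2 = dval n (2 * int m + 1) w"
      by (rule eq_small[OF V0 smallV[OF r2 s2(1)] sw dv[unfolded e2_def]])
    hence eqd: "dval n (2 * int m + 1) (\<lambda>i. \<sigma>2 i * r2 i) = dval n (2 * int m + 1) w"
      unfolding ev_def .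
    have b2: "\<forall>i<n. \<bar>\<sigma>2 i * r2 i\<bar> \<le> int m" using dig_bound(1)[OF r2 s2(1)] by blast
    have dd: "\<forall>i<n. \<sigma>2 i * r2 i = w i" by (rule digits_eq[OF m1 b2 w(1) eqd])
    have "\<forall>i<n. \<sigma> i = \<sigma>1 i"
    proof (intro allI impI)
      fix i assume i: "i < n"
      show "\<sigma> i = \<sigma>1 i"
      proof (rule ccontr)
        assume "\<sigma> i \<noteq> \<sigma>1 i"
        hence "w i = 0" using w(2) i by simp
        hence "\<sigma>2 i * r2 i = 0" using dd i by simp
        thus False using dig_bound(2)[OF r2 s2(1) i] by simp
      qed
    qed
    hence "\<sigma> = \<sigma>1" by (intro PiE_ext[OF s(1)[unfolded Sset_def] s1(1)[unfolded Sset_def]]) simp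
    hence "e = e1" unfolding e_def e1_def by simp
    hence "int k2 - int k1 = 1 * A4 + (-1) * A1 + 0 * A3" unfolding A1_def A4_def by simp
    hence "V dvd int k2 - int k1" using dvd_comb[OF d4 d1 d3] by metis
    hence "k1 = k2" using eqs kk by (metis abs_minus_commute of_nat_eq_iff)
    thus False using nk by simp
  qed
  show ?thesis using nk nr nq by simp
qed



lemma modrep:
  fixes V a :: int
  assumes "V > 0"
  shows "V dvd (a mod V - a)" "int (nat (a mod V)) = a mod V" "nat (a mod V) < nat V"
proof -
  show "V dvd (a mod V - a)" using mod_eq_dvd_iff[of "a mod V" V a] by simp
  show "int (nat (a mod V)) = a mod V" using assms by simp
  show "nat (a mod V) < nat V" using assms by simp
qed

lemma construction:
  assumes m1: "m \<ge> 1" and ov: "odd v" and bv: "(2 * int m + 1) ^ n \<le> int v"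
  shows "\<exists>P. is_PDA v (m ^ n * v) (m ^ n * (v - 2 ^ n)) v P"
proof -
  define Rows where "Rows = Rset n m \<times> {..<v}"
  define F where "F = m ^ n * v"
  define V where "V = int v"
  have v0: "v > 0" using ov by (cases v) auto
  have V0: "V > 0" using v0 unfolding V_def by simp
  have fin: "finite Rows" using finite_Rset unfolding Rows_def by simp
  have cR: "card Rows = F" unfolding Rows_def F_def by (simp add: card_cartesian_product card_Rset)
  obtain h where h: "bij_betw h {..<F} Rows"
    using finite_same_card_bij[of "{..<F}" Rows] fin cR by auto
  define P where "P j k = Qf n m v (h j) k" for j k
  have hR: "h j \<in> Rows" if "j < F" for j using bij_betwE[OF h] that by blast
  have hinj: "inj_on h {..<F}" using h bij_betw_imp_inj_on by blast
  have hsurj: "h ` {..<F} = Rows" using h bij_betw_imp_surj_on by blast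
  have smallV: "2 * \<bar>ev n m r \<sigma>\<bar> < V" if "r \<in> Rset n m" "\<sigma> \<in> Sset n" for r \<sigma>
    using ev_small[OF m1 that] bv unfolding V_def by linarith

  have c1: "\<forall>j<F. \<forall>k<v. \<forall>s. P j k = Some s \<longrightarrow> 1 \<le> s \<and> s \<le> v"
  proof (intro allI impI)
    fix j k s assume "j < F" "k < v" "P j k = Some s"
    then have s: "s = nat ((2 * int (snd (h j)) - int k) mod int v) + 1"
      unfolding P_def Qf_def by (auto split: if_splits)
    have "nat ((2 * int (snd (h j)) - int k) mod V) < nat V" by (rule modrep(3)[OF V0])
    thus "1 \<le> s \<and> s \<le> v" using s unfolding V_def by simp
  qed

  have c2: "\<forall>k<v. card {j. j < F \<and> P j k = None} = m ^ n * (v - 2 ^ n)"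
  proof (intro allI impI)
    fix k assume k: "k < v"
    define NN where "NN = {x \<in> Rows. Qf n m v x k \<noteq> None}"
    define g where "g = (\<lambda>(r, \<sigma>). (r, nat ((int k - ev n m r \<sigma>) mod V)))"
    have NNeq: "NN = g ` (Rset n m \<times> Sset n)"
    proof
      show "NN \<subseteq> g ` (Rset n m \<times> Sset n)"
      proof
        fix x assume x: "x \<in> NN"
        obtain r j where xr: "x = (r, j)" by fastforce
        have r: "r \<in> Rset n m" and j: "j < v" using x unfolding NN_def Rows_def xr by auto
        obtain \<sigma> where \<sigma>: "\<sigma> \<in> Sset n" "(int k - int j) mod V = ev n m r \<sigma> mod V"
          using x unfolding NN_def xr Qf_def V_def by (auto split: if_splits)
        have "V dvd (int k - ev n m r \<sigma>) - int j" using \<sigma>(2) by (simp add: mod_eq_dvd_iff algebra_simps)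
        hence "(int k - ev n m r \<sigma>) mod V = int j mod V" by (simp add: mod_eq_dvd_iff)
        also have "\<dots> = int j" using j unfolding V_def by simp
        finally have "nat ((int k - ev n m r \<sigma>) mod V) = j" by simp
        hence "x = g (r, \<sigma>)" unfolding g_def xr by simp
        thus "x \<in> g ` (Rset n m \<times> Sset n)" using r \<sigma>(1) by blast
      qed
    next
      show "g ` (Rset n m \<times> Sset n) \<subseteq> NN"
      proof
        fix x assume "x \<in> g ` (Rset n m \<times> Sset n)"
        then obtain r \<sigma> where r: "r \<in> Rset n m" and \<sigma>: "\<sigma> \<in> Sset n" and xg: "x = g (r, \<sigma>)" by blast
        define jj where "jj = nat ((int k - ev n m r \<sigma>) mod V)"
        have jjv: "jj < v" using modrep(3)[OF V0] unfolding jj_def V_def by simp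
        have ij: "int jj = (int k - ev n m r \<sigma>) mod V" unfolding jj_def using modrep(2)[OF V0] .
        have "V dvd (int k - ev n m r \<sigma>) mod V - (int k - ev n m r \<sigma>)" by (rule modrep(1)[OF V0])
        hence "V dvd (int k - int jj) - ev n m r \<sigma>" unfolding ij
          by (metis dvd_minus_iff minus_diff_eq diff_diff_eq2 diff_right_commute)
        hence "(int k - int jj) mod V = ev n m r \<sigma> mod V" by (simp add: mod_eq_dvd_iff)
        hence "Qf n m v (r, jj) k \<noteq> None" using \<sigma> unfolding Qf_def V_def by auto
        moreover have "x = (r, jj)" unfolding xg g_def jj_def by simp
        ultimately show "x \<in> NN" unfolding NN_def Rows_def using r jjv by simp
      qed
    qed
    have ginj: "inj_on g (Rset n m \<times> Sset n)"
    proof (rule inj_onI)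
      fix a b assume a: "a \<in> Rset n m \<times> Sset n" and b: "b \<in> Rset n m \<times> Sset n" and gab: "g a = g b"
      obtain r \<sigma> where ar: "a = (r, \<sigma>)" by fastforce
      obtain r' \<sigma>' where br: "b = (r', \<sigma>')" by fastforce
      have r: "r \<in> Rset n m" "\<sigma> \<in> Sset n" using a ar by auto
      have r': "r' \<in> Rset n m" "\<sigma>' \<in> Sset n" using b br by auto
      have G: "(r, nat ((int k - ev n m r \<sigma>) mod V)) = (r', nat ((int k - ev n m r' \<sigma>') mod V))"
        using gab unfolding ar br g_def by (simp only: case_prod_conv)
      have rr: "r = r'" using G by (metis fst_conv)
      have "nat ((int k - ev n m r \<sigma>) mod V) = nat ((int k - ev n m r' \<sigma>') mod V)"
        using G by (metis snd_conv)
      hence "(int k - ev n m r \<sigma>) mod V = (int k - ev n m r' \<sigma>') mod V"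
        using modrep(2)[OF V0, of "int k - ev n m r \<sigma>"] modrep(2)[OF V0, of "int k - ev n m r' \<sigma>'"] by metis
      hence "V dvd (int k - ev n m r \<sigma>) - (int k - ev n m r' \<sigma>')" by (simp add: mod_eq_dvd_iff)
      hence "V dvd ev n m r' \<sigma>' - ev n m r \<sigma>" by (simp add: algebra_simps)
      hence "ev n m r' \<sigma>' = ev n m r \<sigma>" by (rule eq_small[OF V0 smallV[OF r'] smallV[OF r]])
      hence "r' = r \<and> \<sigma>' = \<sigma>" by (rule ev_inj[OF m1 r' r])
      thus "a = b" unfolding ar br by simp
    qed
    have cNN: "card NN = m ^ n * 2 ^ n"
      unfolding NNeq using card_image[OF ginj]
      by (simp add: card_cartesian_product card_Rset card_Sset)
    define A where "A = {j \<in> {..<F}. P j k \<noteq> None}"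
    have hA: "h ` A = NN"
    proof
      show "h ` A \<subseteq> NN" unfolding A_def NN_def P_def using hR by auto
      show "NN \<subseteq> h ` A"
      proof
        fix x assume "x \<in> NN"
        hence x: "x \<in> Rows" "Qf n m v x k \<noteq> None" unfolding NN_def by auto
        then obtain j where "j < F" "h j = x" using hsurj by (metis imageE lessThan_iff)
        thus "x \<in> h ` A" unfolding A_def P_def using x by auto
      qed
    qed
    have AF: "A \<subseteq> {..<F}" unfolding A_def by auto
    have cA: "card A = m ^ n * 2 ^ n"
      using card_image[OF inj_on_subset[OF hinj AF]] hA cNN by simp
    have "{j. j < F \<and> P j k = None} = {..<F} - A" unfolding A_def by auto
    hence "card {j. j < F \<and> P j k = None} = F - card A"
      using card_Diff_subset[OF finite_subset[OF AF] AF] by simp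
    also have "\<dots> = m ^ n * (v - 2 ^ n)" unfolding cA F_def by (simp add: diff_mult_distrib2)
    finally show "card {j. j < F \<and> P j k = None} = m ^ n * (v - 2 ^ n)" .
  qed

  have c3: "\<forall>s\<in>{1..v}. \<exists>j<F. \<exists>k<v. P j k = Some s"
  proof
    fix s assume s: "s \<in> {1..v}"
    define r0 where "r0 = restrict (\<lambda>_. 1::int) {..<n}"
    define \<sigma>0 where "\<sigma>0 = restrict (\<lambda>_. 1::int) {..<n}"
    have r0: "r0 \<in> Rset n m" unfolding r0_def Rset_def restrict_PiE_iff using m1 by simp
    have s0: "\<sigma>0 \<in> Sset n" unfolding \<sigma>0_def Sset_def restrict_PiE_iff by simp
    define e0 where "e0 = ev n m r0 \<sigma>0"
    define jj where "jj = nat ((int s - 1 + e0) mod V)"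
    define kk where "kk = nat ((int jj + e0) mod V)"
    have jjv: "jj < v" using modrep(3)[OF V0] unfolding jj_def V_def by simp
    have kkv: "kk < v" using modrep(3)[OF V0] unfolding kk_def V_def by simp
    have D1: "V dvd int kk - (int jj + e0)" unfolding kk_def using modrep(1,2)[OF V0] by simp
    have D2: "V dvd int jj - (int s - 1 + e0)" unfolding jj_def using modrep(1,2)[OF V0] by simp
    have "(int kk - int jj) - e0 = int kk - (int jj + e0)" by simp
    hence "V dvd (int kk - int jj) - e0" using D1 by metis
    hence E1: "(int kk - int jj) mod V = e0 mod V" by (simp add: mod_eq_dvd_iff)
    have "(2 * int jj - int kk) - (int s - 1) = (-1) * (int kk - (int jj + e0)) + 1 * (int jj - (int s - 1 + e0)) + 0 * 0"
      by (simp add: algebra_simps)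
    hence "V dvd (2 * int jj - int kk) - (int s - 1)" using dvd_comb[OF D1 D2 dvd_0_right] by metis
    hence "(2 * int jj - int kk) mod V = (int s - 1) mod V" by (simp add: mod_eq_dvd_iff)
    also have "\<dots> = int s - 1" using s unfolding V_def by simp
    finally have E2': "(2 * int jj - int kk) mod V = int s - 1" .
    have "nat (int s - 1) + 1 = s" using s by (cases s) auto
    hence E2: "nat ((2 * int jj - int kk) mod V) + 1 = s" unfolding E2' .
    have "Qf n m v (r0, jj) kk = Some s" unfolding Qf_def using E1 E2 s0 unfolding e0_def V_def by auto
    moreover have "(r0, jj) \<in> Rows" unfolding Rows_def using r0 jjv by simp
    then obtain j where "j < F" "h j = (r0, jj)" using hsurj by (metis imageE lessThan_iff)
    ultimately show "\<exists>j<F. \<exists>k<v. P j k = Some s" unfolding P_def using kkv by metis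
  qed

  have c4: "\<forall>j1<F. \<forall>k1<v. \<forall>j2<F. \<forall>k2<v. \<forall>s.
        P j1 k1 = Some s \<and> P j2 k2 = Some s \<and> (j1, k1) \<noteq> (j2, k2) \<longrightarrow>
        j1 \<noteq> j2 \<and> k1 \<noteq> k2 \<and> P j1 k2 = None \<and> P j2 k1 = None"
  proof (intro allI impI)
    fix j1 k1 j2 k2 s
    assume j1: "j1 < F" and k1: "k1 < v" and j2: "j2 < F" and k2: "k2 < v"
      and H: "P j1 k1 = Some s \<and> P j2 k2 = Some s \<and> (j1, k1) \<noteq> (j2, k2)"
    obtain r1 i1 where e1: "h j1 = (r1, i1)" by fastforce
    obtain r2 i2 where e2: "h j2 = (r2, i2)" by fastforce
    have R1: "r1 \<in> Rset n m" "i1 < v" using hR[OF j1] unfolding e1 Rows_def by auto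
    have R2: "r2 \<in> Rset n m" "i2 < v" using hR[OF j2] unfolding e2 Rows_def by auto
    have q1: "Qf n m v (r1, i1) k1 = Some s" using H e1 unfolding P_def by simp
    have q2: "Qf n m v (r2, i2) k2 = Some s" using H e2 unfolding P_def by simp
    have ne: "((r1, i1), k1) \<noteq> ((r2, i2), k2)"
    proof
      assume "((r1, i1), k1) = ((r2, i2), k2)"
      hence "h j1 = h j2" "k1 = k2" using e1 e2 by auto
      hence "j1 = j2" "k1 = k2" using inj_onD[OF hinj] j1 j2 by auto
      thus False using H by simp
    qed
    have A: "(r1, i1) \<noteq> (r2, i2) \<and> k1 \<noteq> k2 \<and> Qf n m v (r1, i1) k2 = None"
      by (rule half[OF m1 ov bv R1(1) R2(1) R1(2) R2(2) k1 k2 q1 q2 ne])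
    have B: "(r2, i2) \<noteq> (r1, i1) \<and> k2 \<noteq> k1 \<and> Qf n m v (r2, i2) k1 = None"
      by (rule half[OF m1 ov bv R2(1) R1(1) R2(2) R1(2) k2 k1 q2 q1]) (use ne in auto)
    have "j1 \<noteq> j2" using A e1 e2 by auto
    thus "j1 \<noteq> j2 \<and> k1 \<noteq> k2 \<and> P j1 k2 = None \<and> P j2 k1 = None"
      using A B e1 e2 unfolding P_def by simp
  qed
  have "is_PDA v F (m ^ n * (v - 2 ^ n)) v P"
    unfolding is_PDA_def using c1 c2 c3 c4 by blast
  thus ?thesis unfolding F_def by blast
qed



theorem corollary1:
  fixes n v m :: nat and q :: real
  assumes "n > 0" and "v > 0" and "odd v"
    and "q = root n (real v)" and "q \<ge> 3"
    and "m = nat \<lfloor>(q - 1) / 2\<rfloor>"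
  shows "\<exists>P. is_PDA v (m ^ n * v) (m ^ n * (v - 2 ^ n)) v P
           \<and> real (m ^ n * (v - 2 ^ n)) / real (m ^ n * v) = 1 - (2 / q) ^ n
           \<and> real v / real (m ^ n * v) = 1 / real m ^ n"
proof -
  have qn: "q ^ n = real v" using assms(1,4) by (simp add: real_root_pow_pos2)
  have fl1: "\<lfloor>(q - 1) / 2\<rfloor> \<ge> 1" using assms(5) by (simp add: le_floor_iff)
  have m1: "m \<ge> 1" using fl1 assms(6) by linarith
  have rm: "real m = of_int \<lfloor>(q - 1) / 2\<rfloor>" using fl1 assms(6) by simp
  have "real m \<le> (q - 1) / 2" unfolding rm by (rule of_int_floor_le)
  hence bq: "real (2 * m + 1) \<le> q" by simp
  have "real (2 * m + 1) ^ n \<le> q ^ n" by (rule power_mono[OF bq]) simp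
  hence "real ((2 * m + 1) ^ n) \<le> real v" using qn by simp
  hence bvn: "(2 * m + 1) ^ n \<le> v" by linarith
  hence bv: "(2 * int m + 1) ^ n \<le> int v" by (metis of_nat_le_iff of_nat_Suc of_nat_mult of_nat_numeral of_nat_power Suc_eq_plus1 add.commute of_nat_add of_nat_1)
  have "2 ^ n \<le> (2 * m + 1) ^ n" by (rule power_mono) (use m1 in simp_all)
  hence v2: "2 ^ n \<le> v" using bvn by linarith
  obtain P where P: "is_PDA v (m ^ n * v) (m ^ n * (v - 2 ^ n)) v P"
    using construction[OF m1 assms(3) bv] by blast
  have mpos: "real m > 0" using m1 by simp
  have vpos: "real v > 0" using assms(2) by simp
  have qpos: "q > 0" using assms(5) by simp
  have r1: "real (m ^ n * (v - 2 ^ n)) / real (m ^ n * v) = 1 - (2 / q) ^ n"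
  proof -
    have "real (m ^ n * (v - 2 ^ n)) / real (m ^ n * v) = (real v - 2 ^ n) / real v"
      using mpos vpos v2 by (simp add: of_nat_diff)
    also have "\<dots> = 1 - 2 ^ n / real v" using vpos by (simp add: field_simps)
    also have "\<dots> = 1 - (2 / q) ^ n" by (simp add: power_divide qn)
    finally show ?thesis .
  qed
  have r2: "real v / real (m ^ n * v) = 1 / real m ^ n"
    using mpos vpos by (simp add: field_simps)
  show ?thesis using P r1 r2 by blast
qed

end
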